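(* Suppose $m=n$, $\Xi=\{\boldsymbol{\xi}\in\mathbb{R}^m:(\boldsymbol{\xi}-\boldsymbol{\xi}_0)^{\top}\boldsymbol{W}^{-1}(\boldsymbol{\xi}-\boldsymbol{\xi}_0)\le1\}$ with $\boldsymbol{W}\succ0$, and $f_t(\boldsymbol{x},\boldsymbol{\xi})=\boldsymbol{\xi}^{\top}\boldsymbol{x}+\langle\boldsymbol{A}^t,\boldsymbol{\xi}\boldsymbol{\xi}^{\top}\rangle+(\boldsymbol{b}^t)^{\top}\boldsymbol{x}+h^t$ for all $t\in[T]$, where $\boldsymbol{A}^t\succeq0$, $\boldsymbol{b}^t\in\mathbb{R}^n$, $h^t\in\mathbb{R}$. Let $\tilde Z_{C_2}$ be the set of $\boldsymbol{x}\in\mathbb{R}^n$ for which there exist $\alpha_t>0$, $q_{it}\ge0$, $\boldsymbol{v}_{it}\in\mathbb{R}^m$ ($i\in[N],t\in[T]$) with, for all $i,t$, $\|\boldsymbol{v}_{it}\|_*\delta+\frac1N\sum_{j=1}^Nq_{jt}\le\epsilon\alpha_t$ and $\sup_{\boldsymbol{\xi}\in\Xi}[\boldsymbol{v}_{it}^{\top}\boldsymbol{\xi}-f_t(\boldsymbol{x},\boldsymbol{\xi})]+\alpha_t-\boldsymbol{v}_{it}^{\top}\boldsymbol{\zeta}^i-q_{it}\le0$. Then $\tilde Z_{C_2}$ equals the set of $\boldsymbol{x}\in\mathbb{R}^n$ for which there exist $\alpha_t>0$, $q_{it}\ge0$, $\boldsymbol{v}_{it}\in\mathbb{R}^m$,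 $u_{it}\in\mathbb{R}$, $\nu_{it}\ge0$ such that for all $i\in[N],t\in[T]$: $$\|\boldsymbol{v}_{it}\|_*\delta+\frac1N\sum_{j=1}^Nq_{jt}\le\epsilon\alpha_t,\qquad u_{it}-[(\boldsymbol{b}^t)^{\top}\boldsymbol{x}+h^t]+\alpha_t-\boldsymbol{v}_{it}^{\top}\boldsymbol{\zeta}^i\le q_{it},$$ $$\begin{bmatrix}\boldsymbol{A}^t+\nu_{it}\boldsymbol{W}^{-1}&-\frac12(2\nu_{it}\boldsymbol{W}^{-1}\boldsymbol{\xi}_0+\boldsymbol{v}_{it}-\boldsymbol{x})\\-\frac12(2\nu_{it}\boldsymbol{W}^{-1}\boldsymbol{\xi}_0+\boldsymbol{v}_{it}-\boldsymbol{x})^{\top}&u_{it}+\nu_{it}\boldsymbol{\xi}_0^{\top}\boldsymbol{W}^{-1}\boldsymbol{\xi}_0-\nu_{it}\end{bmatrix}\succeq0.$$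
   Context: Setting: $\epsilon\in(0,1)$, $\delta>0$, $[T]=\{1,\dots,T\}$; $\boldsymbol{\zeta}^1,\dots,\boldsymbol{\zeta}^N\in\Xi$ given samples; $\|\cdot\|_*$ is the dual norm of a norm on $\mathbb{R}^m$; $\langle\boldsymbol{X},\boldsymbol{Y}\rangle=\mathrm{tr}(\boldsymbol{X}\boldsymbol{Y})$; $\succeq0$ ($\succ0$) denotes positive semidefinite (definite). *)

theory Defs
  imports "HOL-Analysis.Analysis"
begin

definition is_norm :: "(real^'n \<Rightarrow> real) \<Rightarrow> bool" where
  "is_norm nrm \<longleftrightarrow>
     (\<forall>x. 0 \<le> nrm x) \<and> (\<forall>x. nrm x = 0 \<longleftrightarrow> x = 0) \<and>
     (\<forall>c x. nrm (c *\<^sub>R x) = \<bar>c\<bar> * nrm x) \<and>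
     (\<forall>x y. nrm (x + y) \<le> nrm x + nrm y)"

definition dual_norm :: "(real^'n \<Rightarrow> real) \<Rightarrow> real^'n \<Rightarrow> real" where
  "dual_norm nrm v = (SUP x\<in>{x. nrm x \<le> 1}. v \<bullet> x)"

definition psd :: "real^'k^'k \<Rightarrow> bool" where
  "psd M \<longleftrightarrow> transpose M = M \<and> (\<forall>x. 0 \<le> x \<bullet> (M *v x))"

definition pd :: "real^'k^'k \<Rightarrow> bool" where
  "pd M \<longleftrightarrow> transpose M = M \<and> (\<forall>x. x \<noteq> 0 \<longrightarrow> 0 < x \<bullet> (M *v x))"

definition outer :: "real^'n \<Rightarrow> real^'n \<Rightarrow> real^'n^'n" where
  "outer a b = (\<chi> i j. a $ i * b $ j)"

text \<open>Symmetric 2x2 block matrix [[M, c],[c^T, d]] indexed by 'n + unit.\<close>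
definition blockmat :: "real^'n^'n \<Rightarrow> real^'n \<Rightarrow> real \<Rightarrow> real^('n + unit)^('n + unit)" where
  "blockmat M c d = (\<chi> i j. (case i of
       Inl a \<Rightarrow> (case j of Inl b \<Rightarrow> M $ a $ b | Inr _ \<Rightarrow> c $ a)
     | Inr _ \<Rightarrow> (case j of Inl b \<Rightarrow> c $ b | Inr _ \<Rightarrow> d)))"

end

theory Submission
  imports Defs
begin

lemma sum_UNIV_Plus: "(\<Sum>i\<in>(UNIV::('a::finite + 'b::finite) set). f i) = (\<Sum>a\<in>UNIV. f (Inl a)) + (\<Sum>b\<in>UNIV. f (Inr b))"
  by (subst UNIV_Plus_UNIV[symmetric], subst sum.Plus) (auto simp del: UNIV_Plus_UNIV)

lemma quad_sym:
  fixes M :: "real^'n^'n"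
  assumes "transpose M = M"
  shows "x \<bullet> (M *v y) = y \<bullet> (M *v x)"
proof -
  have "x \<bullet> (M *v y) = (\<Sum>i\<in>UNIV. \<Sum>j\<in>UNIV. x$i * M$i$j * y$j)"
    by (simp add: inner_vec_def matrix_vector_mult_def sum_distrib_left mult.assoc)
  also have "\<dots> = (\<Sum>j\<in>UNIV. \<Sum>i\<in>UNIV. x$i * M$i$j * y$j)" by (rule sum.swap)
  also have "\<dots> = y \<bullet> (M *v x)"
  proof -
    have "\<And>i j. M$i$j = M$j$i" using assms by (metis transpose_def vec_lambda_beta)
    then show ?thesis
      by (simp add: inner_vec_def matrix_vector_mult_def sum_distrib_left mult.commute mult.left_commute)
  qed
  finally show ?thesis .
qed

lemma trace_outer: "trace (A ** outer \<xi> \<xi>) = \<xi> \<bullet> ((A::real^'n^'n) *v \<xi>)"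
  by (simp add: trace_def matrix_matrix_mult_def outer_def inner_vec_def matrix_vector_mult_def
      sum_distrib_left mult.commute mult.left_commute)

lemma block_quad:
  fixes M :: "real^'n^'n"
  shows "z \<bullet> (blockmat M c d *v z) = (\<chi> a. z$Inl a) \<bullet> (M *v (\<chi> a. z$Inl a))
     + 2 * (z$Inr ()) * (c \<bullet> (\<chi> a. z$Inl a)) + d * (z$Inr ())^2"
  by (simp add: inner_vec_def matrix_vector_mult_def blockmat_def sum_UNIV_Plus
      sum.distrib sum_distrib_left sum_distrib_right algebra_simps power2_eq_square UNIV_unit)

lemma quad_scale: "(c *\<^sub>R y) \<bullet> ((M::real^'n^'n) *v (c *\<^sub>R y)) = c^2 * (y \<bullet> (M *v y))"
  by (simp add: matrix_vector_mult_scaleR power2_eq_square)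

lemma quad_convex:
  fixes M :: "real^'n^'n"
  assumes "\<forall>z. 0 \<le> z \<bullet> (M *v z)" "0 \<le> t" "t \<le> 1"
  shows "((1-t) *\<^sub>R x + t *\<^sub>R y) \<bullet> (M *v ((1-t) *\<^sub>R x + t *\<^sub>R y))
         \<le> (1-t) * (x \<bullet> (M *v x)) + t * (y \<bullet> (M *v y))"
proof -
  have "(1-t) * (x \<bullet> (M *v x)) + t * (y \<bullet> (M *v y)) - ((1-t) *\<^sub>R x + t *\<^sub>R y) \<bullet> (M *v ((1-t) *\<^sub>R x + t *\<^sub>R y))
     = t * (1-t) * ((x - y) \<bullet> (M *v (x - y)))"
    by (simp add: matrix_vector_right_distrib matrix_vector_mult_diff_distrib matrix_vector_mult_scaleR
        inner_add_left inner_add_right inner_diff_left inner_diff_right algebra_simps)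
  moreover have "0 \<le> t * (1-t) * ((x - y) \<bullet> (M *v (x - y)))"
    using assms by simp
  ultimately show ?thesis by linarith
qed

lemma psd_block_D:
  fixes M :: "real^'n^'n"
  assumes "psd (blockmat M c d)"
  shows "0 \<le> \<xi> \<bullet> (M *v \<xi>) + 2 * (c \<bullet> \<xi>) + d"
proof -
  define z :: "real^('n+unit)" where "z = (\<chi> i. case i of Inl a \<Rightarrow> \<xi>$a | Inr _ \<Rightarrow> 1)"
  have "(\<chi> a. z$Inl a) = \<xi>" by (simp add: z_def vec_eq_iff)
  moreover have "z$Inr () = 1" by (simp add: z_def)
  moreover have "0 \<le> z \<bullet> (blockmat M c d *v z)" using assms by (simp add: psd_def)
  ultimately show ?thesis by (simp add: block_quad)
qed

lemma transpose_blockmat: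
  "transpose M = M \<Longrightarrow> transpose (blockmat M c d) = blockmat M c d"
  unfolding transpose_def blockmat_def
  by (simp add: vec_eq_iff split: sum.splits)

lemma psd_block_I:
  fixes M :: "real^'n^'n"
  assumes sym: "transpose M = M" and nn: "\<forall>y. 0 \<le> y \<bullet> (M *v y)"
    and H: "\<forall>\<xi>. 0 \<le> \<xi> \<bullet> (M *v \<xi>) + 2 * (c \<bullet> \<xi>) + d"
  shows "psd (blockmat M c d)"
  unfolding psd_def
proof (intro conjI allI)
  show "transpose (blockmat M c d) = blockmat M c d" using sym by (rule transpose_blockmat)
  fix z :: "real^('n+unit)"
  define y where "y = (\<chi> a. z$Inl a)"
  define s where "s = z$Inr ()"
  have eq: "z \<bullet> (blockmat M c d *v z) = y \<bullet> (M *v y) + 2 * s * (c \<bullet> y) + d * s^2"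
    by (simp add: block_quad y_def s_def)
  show "0 \<le> z \<bullet> (blockmat M c d *v z)"
  proof (cases "s = 0")
    case True then show ?thesis using eq nn by simp
  next
    case False
    define \<xi> where "\<xi> = (1/s) *\<^sub>R y"
    have y: "y = s *\<^sub>R \<xi>" using False by (simp add: \<xi>_def)
    have "y \<bullet> (M *v y) + 2 * s * (c \<bullet> y) + d * s^2 = s^2 * (\<xi> \<bullet> (M *v \<xi>) + 2 * (c \<bullet> \<xi>) + d)"
      unfolding y quad_scale by (simp add: algebra_simps power2_eq_square)
    also have "\<dots> \<ge> 0" using H by simp
    finally show ?thesis using eq by simp
  qed
qed

lemma pd_inv:
  fixes W :: "real^'n^'n"
  assumes "pd W"
  shows "transpose (matrix_inv W) = matrix_inv W"
    and "\<And>y. y \<noteq> 0 \<Longrightarrow> 0 < y \<bullet> (matrix_inv W *v y)"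
proof -
  have symW: "transpose W = W" using assms by (simp add: pd_def)
  have "\<forall>x. W *v x = 0 \<longrightarrow> x = 0"
    using assms unfolding pd_def by (metis inner_zero_right less_irrefl)
  then have "\<exists>B. B ** W = mat 1" using matrix_left_invertible_ker by blast
  then have "invertible W" using invertible_left_inverse by blast
  then have inv: "W ** matrix_inv W = mat 1 \<and> matrix_inv W ** W = mat 1"
    unfolding invertible_def matrix_inv_def by (rule someI_ex)
  let ?Wi = "matrix_inv W"
  have "transpose ?Wi ** W = mat 1"
    using inv symW by (metis matrix_transpose_mul transpose_mat)
  then have "transpose ?Wi = transpose ?Wi ** (W ** ?Wi)" using inv by (simp add: matrix_mul_rid)
  also have "\<dots> = ?Wi" using \<open>transpose ?Wi ** W = mat 1\<close>
    by (metis matrix_mul_assoc matrix_mul_lid)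
  finally show "transpose ?Wi = ?Wi" .
  fix y :: "real^'n" assume "y \<noteq> 0"
  define z where "z = ?Wi *v y"
  have Wz: "W *v z = y" using inv by (simp add: z_def matrix_vector_mul_assoc matrix_vector_mul_lid)
  have "z \<noteq> 0" using Wz \<open>y \<noteq> 0\<close> by auto
  then have "0 < z \<bullet> (W *v z)" using assms by (simp add: pd_def)
  also have "z \<bullet> (W *v z) = y \<bullet> (?Wi *v y)" using Wz by (simp add: z_def inner_commute)
  finally show "0 < y \<bullet> (?Wi *v y)" .
qed

lemma coercive:
  fixes M :: "real^'n^'n"
  assumes "\<And>y. y \<noteq> 0 \<Longrightarrow> 0 < y \<bullet> (M *v y)"
  shows "\<exists>l>0. \<forall>y. l * (norm y)^2 \<le> y \<bullet> (M *v y)"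
proof -
  have cont: "continuous_on (sphere 0 1) (\<lambda>y. y \<bullet> (M *v y))"
    by (intro continuous_intros linear_continuous_on matrix_vector_mul_bounded_linear)
  have ne: "sphere (0::real^'n) 1 \<noteq> {}" by (simp add: sphere_def) (metis norm_sgn sgn_zero_iff zero_neq_one vector_choose_size zero_le_one)
  obtain y0 where y0: "y0 \<in> sphere 0 1" "\<forall>y\<in>sphere 0 1. y0 \<bullet> (M *v y0) \<le> y \<bullet> (M *v y)"
    using continuous_attains_inf[OF compact_sphere ne cont] by blast
  define l where "l = y0 \<bullet> (M *v y0)"
  have "y0 \<noteq> 0" using y0 by auto
  then have lpos: "l > 0" using assms by (simp add: l_def)
  have "l * (norm y)^2 \<le> y \<bullet> (M *v y)" for y
  proof (cases "y = 0")
    case True then show ?thesis by simp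
  next
    case False
    define u where "u = (1 / norm y) *\<^sub>R y"
    have "u \<in> sphere 0 1" using False by (simp add: u_def)
    then have "l \<le> u \<bullet> (M *v u)" using y0 by (simp add: l_def)
    moreover have "y = norm y *\<^sub>R u" using False by (simp add: u_def)
    then have "y \<bullet> (M *v y) = (norm y)^2 * (u \<bullet> (M *v u))" by (metis quad_scale)
    ultimately show ?thesis by (metis mult.commute mult_right_mono zero_le_power2)
  qed
  then show ?thesis using lpos by blast
qed

lemma slemma:
  fixes g hh :: "'a::real_vector \<Rightarrow> real"
  assumes cg: "\<And>x y t. 0 \<le> t \<Longrightarrow> t \<le> 1 \<Longrightarrow> g ((1-t) *\<^sub>R x + t *\<^sub>R y) \<le> (1-t) * g x + t * g y"
    and ch: "\<And>x y t. 0 \<le> t \<Longrightarrow> t \<le> 1 \<Longrightarrow> hh ((1-t) *\<^sub>R x + t *\<^sub>R y) \<le> (1-t) * hh x + t * hh y"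
    and slater: "hh x0 < 0"
    and imp: "\<And>\<xi>. hh \<xi> \<le> 0 \<Longrightarrow> 0 \<le> g \<xi>"
  shows "\<exists>\<nu>\<ge>0. \<forall>\<xi>. 0 \<le> g \<xi> + \<nu> * hh \<xi>"
proof -
  define K :: "(real \<times> real) set" where "K = {p. \<exists>\<xi>. g \<xi> \<le> fst p \<and> hh \<xi> \<le> snd p}"
  define D :: "(real \<times> real) set" where "D = {p. fst p < 0 \<and> snd p < 0}"
  have convK: "convex K"
    unfolding convex_alt K_def
  proof (clarsimp)
    fix a1 a2 b1 b2 u :: real and \<xi>1 \<xi>2
    assume "0 \<le> u" "u \<le> 1" "g \<xi>1 \<le> a1" "hh \<xi>1 \<le> a2" "g \<xi>2 \<le> b1" "hh \<xi>2 \<le> b2"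
    then show "\<exists>\<xi>. g \<xi> \<le> (1 - u) * a1 + u * b1 \<and> hh \<xi> \<le> (1 - u) * a2 + u * b2"
      using cg[of u \<xi>1 \<xi>2] ch[of u \<xi>1 \<xi>2]
    proof (intro exI[of _ "(1-u) *\<^sub>R \<xi>1 + u *\<^sub>R \<xi>2"] conjI)
      have "(1-u) * g \<xi>1 \<le> (1-u)*a1" "u * g \<xi>2 \<le> u * b1" "(1-u) * hh \<xi>1 \<le> (1-u)*a2" "u * hh \<xi>2 \<le> u * b2"
        using \<open>0 \<le> u\<close> \<open>u \<le> 1\<close> \<open>g \<xi>1 \<le> a1\<close> \<open>hh \<xi>1 \<le> a2\<close> \<open>g \<xi>2 \<le> b1\<close> \<open>hh \<xi>2 \<le> b2\<close>
        by (simp_all add: mult_left_mono)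
      then show "g ((1-u) *\<^sub>R \<xi>1 + u *\<^sub>R \<xi>2) \<le> (1 - u) * a1 + u * b1"
        "hh ((1-u) *\<^sub>R \<xi>1 + u *\<^sub>R \<xi>2) \<le> (1 - u) * a2 + u * b2"
        using cg[of u \<xi>1 \<xi>2] ch[of u \<xi>1 \<xi>2] \<open>0 \<le> u\<close> \<open>u \<le> 1\<close> by linarith+
    qed
  qed
  have convD: "convex D"
    unfolding convex_alt D_def
  proof (clarsimp)
    fix a1 a2 b1 b2 u :: real
    assume "0 \<le> u" "u \<le> 1" "a1 < 0" "a2 < 0" "b1 < 0" "b2 < 0"
    have "(1-u)*a1 \<le> (1-u)*max a1 b1" "u*b1 \<le> u*max a1 b1"
         "(1-u)*a2 \<le> (1-u)*max a2 b2" "u*b2 \<le> u*max a2 b2"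
      using \<open>0 \<le> u\<close> \<open>u \<le> 1\<close> by (simp_all add: mult_left_mono)
    moreover have "(1-u)*max a1 b1 + u*max a1 b1 = max a1 b1" "(1-u)*max a2 b2 + u*max a2 b2 = max a2 b2"
      by (simp_all add: algebra_simps)
    ultimately show "(1 - u) * a1 + u * b1 < 0 \<and> (1 - u) * a2 + u * b2 < 0"
      using \<open>a1 < 0\<close> \<open>a2 < 0\<close> \<open>b1 < 0\<close> \<open>b2 < 0\<close> by linarith
  qed
  have neK: "K \<noteq> {}" unfolding K_def by auto
  have neD: "D \<noteq> {}" unfolding D_def by (auto intro!: exI[of _ "-1::real"])
  have disj: "D \<inter> K = {}"
  proof (rule ccontr)
    assume "D \<inter> K \<noteq> {}"
    then obtain p \<xi> where "fst p < 0" "snd p < 0" "g \<xi> \<le> fst p" "hh \<xi> \<le> snd p"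
      unfolding D_def K_def by blast
    then show False using imp[of \<xi>] by linarith
  qed
  obtain a \<beta> where a0: "a \<noteq> 0" and aD: "\<forall>p\<in>D. a \<bullet> p \<le> \<beta>" and aK: "\<forall>p\<in>K. \<beta> \<le> a \<bullet> p"
    using separating_hyperplane_sets[OF convD convK neD neK disj] by blast
  obtain a1 a2 where a: "a = (a1, a2)" by (cases a)
  have Kmem: "(g \<xi> + s1, hh \<xi> + s2) \<in> K" if "0 \<le> s1" "0 \<le> s2" for \<xi> s1 s2
    using that unfolding K_def by (auto intro!: exI[of _ \<xi>])
  have Kin: "\<beta> \<le> a1 * (g \<xi> + s1) + a2 * (hh \<xi> + s2)" if "0 \<le> s1" "0 \<le> s2" for \<xi> s1 s2
    using aK Kmem[OF that, of \<xi>] a by auto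
  have a1: "0 \<le> a1"
  proof (rule ccontr)
    assume "\<not> 0 \<le> a1"
    define s where "s = (\<bar>\<beta>\<bar> + \<bar>a1 * g x0 + a2 * hh x0\<bar> + 1) / (- a1)"
    have "0 \<le> s" using \<open>\<not> 0 \<le> a1\<close> unfolding s_def by (intro divide_nonneg_pos) auto
    have "a1 * s = - (\<bar>\<beta>\<bar> + \<bar>a1 * g x0 + a2 * hh x0\<bar> + 1)"
      using \<open>\<not> 0 \<le> a1\<close> by (simp add: s_def)
    moreover have "\<beta> \<le> a1 * (g x0 + s) + a2 * (hh x0 + 0)" using Kin[OF \<open>0 \<le> s\<close>, of 0 x0] by simp
    ultimately show False by (simp add: algebra_simps)
  qed
  have a2: "0 \<le> a2"
  proof (rule ccontr)
    assume "\<not> 0 \<le> a2"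
    define s where "s = (\<bar>\<beta>\<bar> + \<bar>a1 * g x0 + a2 * hh x0\<bar> + 1) / (- a2)"
    have "0 \<le> s" using \<open>\<not> 0 \<le> a2\<close> unfolding s_def by (intro divide_nonneg_pos) auto
    have "a2 * s = - (\<bar>\<beta>\<bar> + \<bar>a1 * g x0 + a2 * hh x0\<bar> + 1)"
      using \<open>\<not> 0 \<le> a2\<close> by (simp add: s_def)
    moreover have "\<beta> \<le> a1 * (g x0 + 0) + a2 * (hh x0 + s)" using Kin[OF _ \<open>0 \<le> s\<close>, of 0 x0] by simp
    ultimately show False by (simp add: algebra_simps)
  qed
  have beta: "0 \<le> \<beta>"
  proof (rule ccontr)
    assume "\<not> 0 \<le> \<beta>"
    define e where "e = - \<beta> / (a1 + a2 + 1)"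
    have epos: "0 < e" using \<open>\<not> 0 \<le> \<beta>\<close> a1 a2 unfolding e_def by (intro divide_pos_pos) auto
    have "(-e, -e) \<in> D" using epos by (simp add: D_def)
    then have "- e * (a1 + a2) \<le> \<beta>" using aD a by (auto simp: algebra_simps)
    moreover have "- e * (a1 + a2 + 1) = \<beta>" using a1 a2 by (simp add: e_def)
    ultimately show False using epos by (simp add: algebra_simps)
  qed
  have all: "0 \<le> a1 * g \<xi> + a2 * hh \<xi>" for \<xi>
    using Kin[of 0 0 \<xi>] beta by simp
  have "a1 \<noteq> 0"
  proof
    assume "a1 = 0"
    then have "a2 \<noteq> 0" using a0 a by (auto simp: zero_prod_def)
    then have "a2 > 0" using a2 by simp
    then have "a2 * hh x0 < 0" using slater by (simp add: mult_pos_neg)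
    then show False using all[of x0] \<open>a1 = 0\<close> by simp
  qed
  then have a1p: "0 < a1" using a1 by simp
  show ?thesis
  proof (intro exI[of _ "a2 / a1"] conjI allI)
    show "0 \<le> a2 / a1" using a1 a2 by simp
    fix \<xi>
    have "g \<xi> + a2 / a1 * hh \<xi> = (a1 * g \<xi> + a2 * hh \<xi>) / a1" using a1p by (simp add: field_simps)
    then show "0 \<le> g \<xi> + a2 / a1 * hh \<xi>" using all[of \<xi>] a1p by simp
  qed
qed

lemma transpose_add_scaleR: "transpose ((A::real^'n^'n) + c *\<^sub>R B) = transpose A + c *\<^sub>R transpose B"
  by (simp add: transpose_def vec_eq_iff)

lemma key_identity:
  fixes A Wi :: "real^'n^'n"
  assumes "transpose Wi = Wi"
  shows "\<xi> \<bullet> ((A + \<nu> *\<^sub>R Wi) *v \<xi>) + 2 * ((- (1/2) *\<^sub>R ((2 * \<nu>) *\<^sub>R (Wi *v \<xi>0) + w - x)) \<bullet> \<xi>)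
          + (u + \<nu> * (\<xi>0 \<bullet> (Wi *v \<xi>0)) - \<nu>)
       = (\<xi> \<bullet> (A *v \<xi>) - (w - x) \<bullet> \<xi> + u) + \<nu> * ((\<xi> - \<xi>0) \<bullet> (Wi *v (\<xi> - \<xi>0)) - 1)"
proof -
  have s: "\<xi>0 \<bullet> (Wi *v \<xi>) = \<xi> \<bullet> (Wi *v \<xi>0)" using quad_sym[OF assms] by blast
  show ?thesis
    by (simp add: matrix_vector_mult_add_rdistrib matrix_vector_mult_diff_distrib matrix_vector_mult_scaleR
        scaleR_matrix_vector_assoc[symmetric] inner_add_left inner_add_right inner_diff_left inner_diff_right s inner_commute algebra_simps)
qed

theorem proposition3:
  fixes nrm :: "real^'n \<Rightarrow> real"
    and \<epsilon> \<delta> :: real and N T :: nat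
    and \<zeta> :: "nat \<Rightarrow> real^'n"
    and W :: "real^'n^'n" and \<xi>0 :: "real^'n"
    and A :: "nat \<Rightarrow> real^'n^'n" and b :: "nat \<Rightarrow> real^'n" and h :: "nat \<Rightarrow> real"
    and \<Xi> :: "(real^'n) set"
    and f :: "nat \<Rightarrow> real^'n \<Rightarrow> real^'n \<Rightarrow> real"
  assumes norm: "is_norm nrm"
    and eps: "0 < \<epsilon>" "\<epsilon> < 1"
    and delta: "0 < \<delta>"
    and N_pos: "0 < N"
    and W_pd: "pd W"
    and Xi_def: "\<Xi> = {\<xi>. (\<xi> - \<xi>0) \<bullet> (matrix_inv W *v (\<xi> - \<xi>0)) \<le> 1}"
    and samples: "\<forall>i\<in>{1..N}. \<zeta> i \<in> \<Xi>"
    and A_psd: "\<forall>t\<in>{1..T}. psd (A t)"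
    and f_def: "\<forall>t\<in>{1..T}. \<forall>x \<xi>. f t x \<xi> =
                  \<xi> \<bullet> x + trace (A t ** outer \<xi> \<xi>) + b t \<bullet> x + h t"
  shows
   "{x. \<exists>(\<alpha>::nat \<Rightarrow> real) (q::nat \<Rightarrow> nat \<Rightarrow> real) (v::nat \<Rightarrow> nat \<Rightarrow> real^'n).
          (\<forall>t\<in>{1..T}. 0 < \<alpha> t) \<and>
          (\<forall>i\<in>{1..N}. \<forall>t\<in>{1..T}.
             0 \<le> q i t \<and>
             dual_norm nrm (v i t) * \<delta> + (1 / real N) * (\<Sum>j=1..N. q j t) \<le> \<epsilon> * \<alpha> t \<and>
             (SUP \<xi>\<in>\<Xi>. v i t \<bullet> \<xi> - f t x \<xi>) + \<alpha> t - v i t \<bullet> \<zeta> i - q i t \<le> 0)}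
    = {x. \<exists>(\<alpha>::nat \<Rightarrow> real) (q::nat \<Rightarrow> nat \<Rightarrow> real) (v::nat \<Rightarrow> nat \<Rightarrow> real^'n)
           (u::nat \<Rightarrow> nat \<Rightarrow> real) (\<nu>::nat \<Rightarrow> nat \<Rightarrow> real).
          (\<forall>t\<in>{1..T}. 0 < \<alpha> t) \<and>
          (\<forall>i\<in>{1..N}. \<forall>t\<in>{1..T}.
             0 \<le> q i t \<and> 0 \<le> \<nu> i t \<and>
             dual_norm nrm (v i t) * \<delta> + (1 / real N) * (\<Sum>j=1..N. q j t) \<le> \<epsilon> * \<alpha> t \<and>
             u i t - (b t \<bullet> x + h t) + \<alpha> t - v i t \<bullet> \<zeta> i \<le> q i t \<and>
             psd (blockmat (A t + \<nu> i t *\<^sub>R matrix_inv W)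
                    (- (1/2) *\<^sub>R ((2 * \<nu> i t) *\<^sub>R (matrix_inv W *v \<xi>0) + v i t - x))
                    (u i t + \<nu> i t * (\<xi>0 \<bullet> (matrix_inv W *v \<xi>0)) - \<nu> i t)))}"

proof -
  let ?Wi = "matrix_inv W"
  have symWi: "transpose ?Wi = ?Wi" and pdWi: "\<And>y. y \<noteq> 0 \<Longrightarrow> 0 < y \<bullet> (?Wi *v y)"
    using pd_inv[OF W_pd] by auto
  have nnWi: "\<forall>y. 0 \<le> y \<bullet> (?Wi *v y)"
    using pdWi by (metis inner_zero_left less_eq_real_def)
  obtain l where lpos: "l > 0" and lbd: "\<forall>y. l * (norm y)^2 \<le> y \<bullet> (?Wi *v y)"
    using coercive[OF pdWi] by blast
  define H where "H \<xi> = (\<xi> - \<xi>0) \<bullet> (?Wi *v (\<xi> - \<xi>0)) - 1" for \<xi>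
  have XiH: "\<xi> \<in> \<Xi> \<longleftrightarrow> H \<xi> \<le> 0" for \<xi> unfolding Xi_def H_def by simp
  have Hxi0: "H \<xi>0 = -1" unfolding H_def by simp
  have xi0: "\<xi>0 \<in> \<Xi>" using XiH Hxi0 by simp
  define R where "R = norm \<xi>0 + max 1 (1/l)"
  have bnd: "norm \<xi> \<le> R" if "\<xi> \<in> \<Xi>" for \<xi>
  proof -
    define d where "d = \<xi> - \<xi>0"
    have "l * (norm d)^2 \<le> 1" using lbd[rule_format, of d] that unfolding Xi_def d_def by auto
    then have "(norm d)^2 \<le> 1/l" using lpos by (simp add: field_simps mult.commute)
    have "norm d \<le> max 1 (1/l)"
    proof (cases "norm d \<le> 1")
      case False
      then have "norm d * 1 \<le> norm d * norm d" by (intro mult_left_mono) auto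
      then have "norm d \<le> (norm d)^2" by (simp add: power2_eq_square)
      then show ?thesis using \<open>(norm d)^2 \<le> 1/l\<close> by linarith
    qed simp
    moreover have "norm \<xi> \<le> norm \<xi>0 + norm d" unfolding d_def by (metis norm_triangle_sub add.commute)
    ultimately show ?thesis unfolding R_def by linarith
  qed
  have fexp: "w \<bullet> \<xi> - f t x \<xi> = (w - x) \<bullet> \<xi> - \<xi> \<bullet> (A t *v \<xi>) - (b t \<bullet> x + h t)"
    if "t \<in> {1..T}" for t w x \<xi>
    using f_def that by (simp add: trace_outer inner_diff_left inner_diff_right inner_commute)
  have Aprops: "transpose (A t) = A t" "\<forall>y. 0 \<le> y \<bullet> (A t *v y)" if "t \<in> {1..T}" for t
    using A_psd that by (auto simp: psd_def)
  show ?thesis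
  proof (rule set_eqI, rule iffI)
    fix x
    assume "x \<in> {x. \<exists>(\<alpha>::nat \<Rightarrow> real) (q::nat \<Rightarrow> nat \<Rightarrow> real) (v::nat \<Rightarrow> nat \<Rightarrow> real^'n).
          (\<forall>t\<in>{1..T}. 0 < \<alpha> t) \<and>
          (\<forall>i\<in>{1..N}. \<forall>t\<in>{1..T}.
             0 \<le> q i t \<and>
             dual_norm nrm (v i t) * \<delta> + (1 / real N) * (\<Sum>j=1..N. q j t) \<le> \<epsilon> * \<alpha> t \<and>
             (SUP \<xi>\<in>\<Xi>. v i t \<bullet> \<xi> - f t x \<xi>) + \<alpha> t - v i t \<bullet> \<zeta> i - q i t \<le> 0)}"
    then obtain \<alpha> q v where a: "\<forall>t\<in>{1..T}. 0 < \<alpha> t" and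
      P: "\<forall>i\<in>{1..N}. \<forall>t\<in>{1..T}.
             0 \<le> q i t \<and>
             dual_norm nrm (v i t) * \<delta> + (1 / real N) * (\<Sum>j=1..N. q j t) \<le> \<epsilon> * \<alpha> t \<and>
             (SUP \<xi>\<in>\<Xi>. v i t \<bullet> \<xi> - f t x \<xi>) + \<alpha> t - v i t \<bullet> \<zeta> i - q i t \<le> 0"
      by blast
    define u where "u i t = (SUP \<xi>\<in>\<Xi>. v i t \<bullet> \<xi> - f t x \<xi>) + (b t \<bullet> x + h t)" for i t
    define G where "G i t \<xi> = \<xi> \<bullet> (A t *v \<xi>) - (v i t - x) \<bullet> \<xi> + u i t" for i t \<xi>
    have ex: "\<exists>n\<ge>0. \<forall>\<xi>. 0 \<le> G i t \<xi> + n * H \<xi>" if it: "i \<in> {1..N}" "t \<in> {1..T}" for i t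
    proof (rule slemma[of "G i t" H \<xi>0])
      fix y z :: "real^'n" and s :: real assume s: "0 \<le> s" "s \<le> 1"
      have "((1-s) *\<^sub>R y + s *\<^sub>R z) \<bullet> (A t *v ((1-s) *\<^sub>R y + s *\<^sub>R z)) \<le> (1-s) * (y \<bullet> (A t *v y)) + s * (z \<bullet> (A t *v z))"
        using quad_convex[OF Aprops(2)[OF it(2)] s] .
      moreover have "(v i t - x) \<bullet> ((1-s) *\<^sub>R y + s *\<^sub>R z) = (1-s) * ((v i t - x) \<bullet> y) + s * ((v i t - x) \<bullet> z)"
        by (simp add: inner_add_right)
      moreover have "u i t = (1-s) * u i t + s * u i t" by (simp add: algebra_simps)
      ultimately show "G i t ((1-s) *\<^sub>R y + s *\<^sub>R z) \<le> (1-s) * G i t y + s * G i t z"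
        unfolding G_def by (simp add: algebra_simps)
    next
      fix y z :: "real^'n" and s :: real assume s: "0 \<le> s" "s \<le> 1"
      have e: "(1-s) *\<^sub>R y + s *\<^sub>R z - \<xi>0 = (1-s) *\<^sub>R (y - \<xi>0) + s *\<^sub>R (z - \<xi>0)"
        by (simp add: algebra_simps)
      show "H ((1-s) *\<^sub>R y + s *\<^sub>R z) \<le> (1-s) * H y + s * H z"
        using quad_convex[OF nnWi s, of "y - \<xi>0" "z - \<xi>0"] unfolding H_def e
        by (simp add: algebra_simps)
    next
      show "H \<xi>0 < 0" using Hxi0 by simp
    next
      fix \<xi> assume "H \<xi> \<le> 0"
      then have xi: "\<xi> \<in> \<Xi>" using XiH by simp
      have "bdd_above ((\<lambda>\<xi>. v i t \<bullet> \<xi> - f t x \<xi>) ` \<Xi>)"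
      proof (rule bdd_aboveI2)
        fix \<eta> assume "\<eta> \<in> \<Xi>"
        have "(v i t - x) \<bullet> \<eta> \<le> norm (v i t - x) * norm \<eta>" by (rule norm_cauchy_schwarz)
        also have "\<dots> \<le> norm (v i t - x) * R" using bnd[OF \<open>\<eta> \<in> \<Xi>\<close>] by (simp add: mult_left_mono)
        finally show "v i t \<bullet> \<eta> - f t x \<eta> \<le> norm (v i t - x) * R - (b t \<bullet> x + h t)"
          using fexp[OF it(2)] Aprops(2)[OF it(2)] by (smt (verit))
      qed
      then have "v i t \<bullet> \<xi> - f t x \<xi> \<le> (SUP \<xi>\<in>\<Xi>. v i t \<bullet> \<xi> - f t x \<xi>)"
        using xi by (rule cSUP_upper2) simp
      then show "0 \<le> G i t \<xi>" unfolding G_def u_def using fexp[OF it(2)] by simp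
    qed
    define \<nu> where "\<nu> i t = (SOME n. 0 \<le> n \<and> (\<forall>\<xi>. 0 \<le> G i t \<xi> + n * H \<xi>))" for i t
    have \<nu>: "0 \<le> \<nu> i t \<and> (\<forall>\<xi>. 0 \<le> G i t \<xi> + \<nu> i t * H \<xi>)" if "i \<in> {1..N}" "t \<in> {1..T}" for i t
      unfolding \<nu>_def using someI_ex[OF ex[OF that]] by simp
    show "x \<in> {x. \<exists>(\<alpha>::nat \<Rightarrow> real) (q::nat \<Rightarrow> nat \<Rightarrow> real) (v::nat \<Rightarrow> nat \<Rightarrow> real^'n)
           (u::nat \<Rightarrow> nat \<Rightarrow> real) (\<nu>::nat \<Rightarrow> nat \<Rightarrow> real).
          (\<forall>t\<in>{1..T}. 0 < \<alpha> t) \<and>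
          (\<forall>i\<in>{1..N}. \<forall>t\<in>{1..T}.
             0 \<le> q i t \<and> 0 \<le> \<nu> i t \<and>
             dual_norm nrm (v i t) * \<delta> + (1 / real N) * (\<Sum>j=1..N. q j t) \<le> \<epsilon> * \<alpha> t \<and>
             u i t - (b t \<bullet> x + h t) + \<alpha> t - v i t \<bullet> \<zeta> i \<le> q i t \<and>
             psd (blockmat (A t + \<nu> i t *\<^sub>R matrix_inv W)
                    (- (1/2) *\<^sub>R ((2 * \<nu> i t) *\<^sub>R (matrix_inv W *v \<xi>0) + v i t - x))
                    (u i t + \<nu> i t * (\<xi>0 \<bullet> (matrix_inv W *v \<xi>0)) - \<nu> i t)))}"
    proof (intro CollectI exI conjI ballI)
      show "0 < \<alpha> t" if "t \<in> {1..T}" for t using a that by blast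
      fix i t assume it: "i \<in> {1..N}" "t \<in> {1..T}"
      show "0 \<le> q i t" using P it by blast
      show "0 \<le> \<nu> i t" using \<nu>[OF it] by blast
      show "dual_norm nrm (v i t) * \<delta> + (1 / real N) * (\<Sum>j=1..N. q j t) \<le> \<epsilon> * \<alpha> t" using P it by blast
      show "u i t - (b t \<bullet> x + h t) + \<alpha> t - v i t \<bullet> \<zeta> i \<le> q i t" using P it unfolding u_def by fastforce
      show "psd (blockmat (A t + \<nu> i t *\<^sub>R matrix_inv W)
                    (- (1/2) *\<^sub>R ((2 * \<nu> i t) *\<^sub>R (matrix_inv W *v \<xi>0) + v i t - x))
                    (u i t + \<nu> i t * (\<xi>0 \<bullet> (matrix_inv W *v \<xi>0)) - \<nu> i t))"
      proof (rule psd_block_I)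
        show "transpose (A t + \<nu> i t *\<^sub>R ?Wi) = A t + \<nu> i t *\<^sub>R ?Wi"
          using Aprops(1)[OF it(2)] symWi by (simp add: transpose_add_scaleR)
        show "\<forall>y. 0 \<le> y \<bullet> ((A t + \<nu> i t *\<^sub>R ?Wi) *v y)"
          using Aprops(2)[OF it(2)] nnWi \<nu>[OF it]
          by (simp add: matrix_vector_mult_add_rdistrib scaleR_matrix_vector_assoc[symmetric] inner_add_right)
        show "\<forall>\<xi>. 0 \<le> \<xi> \<bullet> ((A t + \<nu> i t *\<^sub>R ?Wi) *v \<xi>) + 2 * ((- (1/2) *\<^sub>R ((2 * \<nu> i t) *\<^sub>R (?Wi *v \<xi>0) + v i t - x)) \<bullet> \<xi>)
          + (u i t + \<nu> i t * (\<xi>0 \<bullet> (?Wi *v \<xi>0)) - \<nu> i t)"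
          using \<nu>[OF it] unfolding key_identity[OF symWi] G_def H_def by simp
      qed
    qed
  next
    fix x
    assume "x \<in> {x. \<exists>(\<alpha>::nat \<Rightarrow> real) (q::nat \<Rightarrow> nat \<Rightarrow> real) (v::nat \<Rightarrow> nat \<Rightarrow> real^'n)
           (u::nat \<Rightarrow> nat \<Rightarrow> real) (\<nu>::nat \<Rightarrow> nat \<Rightarrow> real).
          (\<forall>t\<in>{1..T}. 0 < \<alpha> t) \<and>
          (\<forall>i\<in>{1..N}. \<forall>t\<in>{1..T}.
             0 \<le> q i t \<and> 0 \<le> \<nu> i t \<and>
             dual_norm nrm (v i t) * \<delta> + (1 / real N) * (\<Sum>j=1..N. q j t) \<le> \<epsilon> * \<alpha> t \<and>
             u i t - (b t \<bullet> x + h t) + \<alpha> t - v i t \<bullet> \<zeta> i \<le> q i t \<and>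
             psd (blockmat (A t + \<nu> i t *\<^sub>R matrix_inv W)
                    (- (1/2) *\<^sub>R ((2 * \<nu> i t) *\<^sub>R (matrix_inv W *v \<xi>0) + v i t - x))
                    (u i t + \<nu> i t * (\<xi>0 \<bullet> (matrix_inv W *v \<xi>0)) - \<nu> i t)))}"
    then obtain \<alpha> q v u \<nu> where a: "\<forall>t\<in>{1..T}. 0 < \<alpha> t" and
      P: "\<forall>i\<in>{1..N}. \<forall>t\<in>{1..T}.
             0 \<le> q i t \<and> 0 \<le> \<nu> i t \<and>
             dual_norm nrm (v i t) * \<delta> + (1 / real N) * (\<Sum>j=1..N. q j t) \<le> \<epsilon> * \<alpha> t \<and>
             u i t - (b t \<bullet> x + h t) + \<alpha> t - v i t \<bullet> \<zeta> i \<le> q i t \<and>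
             psd (blockmat (A t + \<nu> i t *\<^sub>R matrix_inv W)
                    (- (1/2) *\<^sub>R ((2 * \<nu> i t) *\<^sub>R (matrix_inv W *v \<xi>0) + v i t - x))
                    (u i t + \<nu> i t * (\<xi>0 \<bullet> (matrix_inv W *v \<xi>0)) - \<nu> i t))"
      by blast
    show "x \<in> {x. \<exists>(\<alpha>::nat \<Rightarrow> real) (q::nat \<Rightarrow> nat \<Rightarrow> real) (v::nat \<Rightarrow> nat \<Rightarrow> real^'n).
          (\<forall>t\<in>{1..T}. 0 < \<alpha> t) \<and>
          (\<forall>i\<in>{1..N}. \<forall>t\<in>{1..T}.
             0 \<le> q i t \<and>
             dual_norm nrm (v i t) * \<delta> + (1 / real N) * (\<Sum>j=1..N. q j t) \<le> \<epsilon> * \<alpha> t \<and>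
             (SUP \<xi>\<in>\<Xi>. v i t \<bullet> \<xi> - f t x \<xi>) + \<alpha> t - v i t \<bullet> \<zeta> i - q i t \<le> 0)}"
    proof (intro CollectI exI conjI ballI)
      show "0 < \<alpha> t" if "t \<in> {1..T}" for t using a that by blast
      fix i t assume it: "i \<in> {1..N}" "t \<in> {1..T}"
      show "0 \<le> q i t" using P it by blast
      show "dual_norm nrm (v i t) * \<delta> + (1 / real N) * (\<Sum>j=1..N. q j t) \<le> \<epsilon> * \<alpha> t" using P it by blast
      have nu: "0 \<le> \<nu> i t" using P it by blast
      have ps: "psd (blockmat (A t + \<nu> i t *\<^sub>R ?Wi)
                    (- (1/2) *\<^sub>R ((2 * \<nu> i t) *\<^sub>R (?Wi *v \<xi>0) + v i t - x))
                    (u i t + \<nu> i t * (\<xi>0 \<bullet> (?Wi *v \<xi>0)) - \<nu> i t))" using P it by blast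
      have ub: "v i t \<bullet> \<xi> - f t x \<xi> \<le> u i t - (b t \<bullet> x + h t)" if xi: "\<xi> \<in> \<Xi>" for \<xi>
      proof -
        have "0 \<le> (\<xi> \<bullet> (A t *v \<xi>) - (v i t - x) \<bullet> \<xi> + u i t) + \<nu> i t * H \<xi>"
          using psd_block_D[OF ps, of \<xi>] unfolding key_identity[OF symWi] H_def .
        moreover have "\<nu> i t * H \<xi> \<le> 0" using nu XiH xi by (simp add: mult_nonneg_nonpos)
        ultimately show ?thesis using fexp[OF it(2)] by simp
      qed
      have "(SUP \<xi>\<in>\<Xi>. v i t \<bullet> \<xi> - f t x \<xi>) \<le> u i t - (b t \<bullet> x + h t)"
        using xi0 ub by (intro cSUP_least) auto
      moreover have "u i t - (b t \<bullet> x + h t) + \<alpha> t - v i t \<bullet> \<zeta> i \<le> q i t" using P it by blast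
      ultimately show "(SUP \<xi>\<in>\<Xi>. v i t \<bullet> \<xi> - f t x \<xi>) + \<alpha> t - v i t \<bullet> \<zeta> i - q i t \<le> 0" by linarith
    qed
  qed
qed

end
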